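(* Let $a,c\in\mathbb{R}$, $b\in(\max\{a,0\},\infty)$, $h\in\mathbb{N}$, $v=(v_1,\dots,v_h)\in\mathbb{R}^h$, $f\in C^1(\mathbb{R},\mathbb{R})$, $p\in C(\mathbb{R},\mathbb{R})$ satisfy for all $x\in\mathbb{R}$ that $f'(x)>0=f(a)$ and $p^{-1}(\mathbb{R}\setminus\{0\})=(a,b)$, with $\mathcal{N}^\theta$, $\mathcal{L}$, $\mathcal{G}$ as in the context. Assume for all $x\in\mathbb{R}$ that $p(x)\ge0$, assume that $f$ is strictly convex, let $\Lambda=\sup_{x\in[a,b]}f'(x)$, assume $\min_{j\in\{1,\dots,h\}}v_j>0$, let $\Theta=(\Theta_1,\dots,\Theta_h)\in C([0,\infty),\mathbb{R}^h)$ satisfy for all $t\in[0,\infty)$ that $\Theta_t=\Theta_0+\int_0^t\mathcal{G}(\Theta_s)\,\mathrm{d}s$ (write $\Theta_{i,t}$ for the $i$-th coordinate of $\Theta_t$), assume $\sum_{j\in\{i\in\{1,\dots,h\}\colon\Theta_{i,0}<b\}}v_j\ge\Lambda$, and let $\vartheta\in\mathbb{R}^h$ satisfy $$\limsup_{t\to\infty}\big(\|\Theta_t-\vartheta\|+|\mathcal{L}(\Theta_t)-\mathcal{L}(\vartheta)|+\|\mathcal{G}(\Theta_t)\|+\|\mathcal{G}(\vartheta)\|\big)=0.$$ Then $\mathcal{N}^\vartheta(b)\ge f(b)$.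
   Context: For $\theta=(\theta_1,\dots,\theta_h)\in\mathbb{R}^h$ let $\mathcal{N}^\theta(x)=c+\sum_{j=1}^hv_j\max\{x-\theta_j,0\}$ for $x\in\mathbb{R}$, let $\mathcal{L}(\theta)=\int_{\mathbb{R}}(\mathcal{N}^\theta(x)-f(x))^2p(x)\,\mathrm{d}x$, and let $\mathcal{G}\colon\mathbb{R}^h\to\mathbb{R}^h$ satisfy $\mathcal{G}(\theta)=-(\nabla\mathcal{L})(\theta)$ at every $\theta$ at which $\mathcal{L}$ is differentiable. $\|\cdot\|$ is the Euclidean norm. *)

theory Defs
  imports "HOL-Analysis.Analysis"
begin

definition strictly_convex_on :: "real set \<Rightarrow> (real \<Rightarrow> real) \<Rightarrow> bool" where
  "strictly_convex_on S f \<longleftrightarrow>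
     (\<forall>x\<in>S. \<forall>y\<in>S. \<forall>u::real. x \<noteq> y \<and> 0 < u \<and> u < 1 \<longrightarrow>
        f (u * x + (1 - u) * y) < u * f x + (1 - u) * f y)"

definition netw :: "real \<Rightarrow> real^'h \<Rightarrow> real^'h \<Rightarrow> real \<Rightarrow> real" where
  "netw c v \<theta> x = c + (\<Sum>j\<in>UNIV. v $ j * max (x - \<theta> $ j) 0)"

definition risk :: "real \<Rightarrow> real^'h \<Rightarrow> (real \<Rightarrow> real) \<Rightarrow> (real \<Rightarrow> real) \<Rightarrow> real^'h \<Rightarrow> real" where
  "risk c v f p \<theta> = integral UNIV (\<lambda>x. (netw c v \<theta> x - f x)\<^sup>2 * p x)"

end

theory Submission
  imports Defs
begin


lemma ind_has_int:
  fixes g :: "real \<Rightarrow> real"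
  assumes "continuous_on {a..b} g"
  shows "((\<lambda>x. if t \<le> x then g x else 0) has_integral integral {max a t..b} g) {a..b}"
proof -
  have e: "{t..} \<inter> {a..b} = {max a t..b}" by auto
  have "g integrable_on {max a t..b}"
    by (rule integrable_continuous_interval) (rule continuous_on_subset[OF assms], auto)
  then have "(g has_integral integral {max a t..b} g) ({t..} \<inter> {a..b})"
    unfolding e by (rule integrable_integral)
  then have "((\<lambda>x. if x \<in> {t..} then g x else 0) has_integral integral {max a t..b} g) {a..b}"
    by (subst has_integral_restrict_Int)
  then show ?thesis by simp
qed

lemma ind_bound:
  fixes g :: "real \<Rightarrow> real"
  assumes "continuous_on {a..b} g" "0 \<le> B" "\<And>x. x \<in> {a..b} \<Longrightarrow> \<bar>g x\<bar> \<le> B"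
  shows "\<bar>integral {max a t..b} g\<bar> \<le> B * max (b - t) 0"
proof (cases "max a t \<le> b")
  case True
  have "g integrable_on {max a t..b}"
    by (rule integrable_continuous_interval) (rule continuous_on_subset[OF assms(1)], auto)
  then have "norm (integral {max a t..b} g) \<le> B * Henstock_Kurzweil_Integration.content {max a t..b}"
    by (intro has_integral_bound_real[where S="{}"]) (use assms in auto)
  also have "\<dots> \<le> B * max (b - t) 0" using True assms(2)
    by (intro mult_left_mono) auto
  finally show ?thesis by simp
next
  case False
  then have "{max a t..b} = {}" by auto
  then show ?thesis using assms(2) by simp
qed

lemma r_bound:
  fixes x t k :: real
  shows "\<bar>max (x - (t + k)) 0 - max (x - t) 0 + (if t \<le> x then k else 0)\<bar>
     \<le> (if x \<in> {t - \<bar>k\<bar>..t + \<bar>k\<bar>} then \<bar>k\<bar> else 0)"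
  by (auto simp: max_def abs_if split: if_splits)

lemma ind_const_int:
  fixes l u k :: real
  assumes "l \<le> u" "0 \<le> k"
  shows "((\<lambda>x. if x \<in> {l..u} then k else 0) has_integral (Henstock_Kurzweil_Integration.content {max l a..min u b} * k)) {a..b}"
proof -
  have e: "{l..u} \<inter> {a..b} = {max l a..min u b}" by auto
  show ?thesis
    using has_integral_const_real[of k "max l a" "min u b"]
    by (subst has_integral_restrict_Int, unfold e) (simp add: mult.commute)
qed

lemma content_le: "l \<le> u \<Longrightarrow> Henstock_Kurzweil_Integration.content {max l a..min u (b::real)} \<le> u - l"
  by auto

lemma bounded_cont:
  fixes g :: "real \<Rightarrow> real"
  assumes "continuous_on {a..b} g"
  obtains M where "M \<ge> 0" "\<And>x. x \<in> {a..b} \<Longrightarrow> \<bar>g x\<bar> \<le> M"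
proof -
  have "compact (g ` {a..b})" by (rule compact_continuous_image[OF assms]) simp
  then have "bounded (g ` {a..b})" by (rule compact_imp_bounded)
  then obtain B where "B > 0" "\<And>y. y \<in> g ` {a..b} \<Longrightarrow> norm y \<le> B"
    using bounded_pos by metis
  then show ?thesis using that[of B] by auto
qed



lemma pw:
  fixes A B Q M P W S S' Sr d :: real
  assumes "B = A + d" "\<bar>A\<bar> \<le> M" "\<bar>Q\<bar> \<le> P" "\<bar>d\<bar> \<le> W" "\<bar>d + S'\<bar> \<le> Sr"
  shows "\<bar>B^2*Q - A^2*Q + 2*A*Q*S'\<bar> \<le> P * (2*M*Sr + W^2)"
proof -
  have e: "B^2*Q - A^2*Q + 2*A*Q*S' = Q * (2*A*(d+S') + d^2)"
    using assms(1) by (simp add: algebra_simps power2_eq_square)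
  have 1: "\<bar>2*A*(d+S')\<bar> \<le> 2*M*Sr"
    using assms by (simp add: abs_mult mult_mono)
  have 2: "d^2 \<le> W^2"
    using assms(4) by (metis abs_ge_zero order_trans power2_abs power_mono)
  have "\<bar>2*A*(d+S') + d^2\<bar> \<le> 2*M*Sr + W^2"
    using 1 2 zero_le_power2[of d] zero_le_power2[of W] unfolding abs_le_iff by linarith
  then show ?thesis unfolding e abs_mult
    by (intro mult_mono) (use assms in auto)
qed



definition Jd :: "real \<Rightarrow> real^'h \<Rightarrow> (real\<Rightarrow>real) \<Rightarrow> (real\<Rightarrow>real) \<Rightarrow> real \<Rightarrow> real \<Rightarrow> real^'h \<Rightarrow> 'h \<Rightarrow> real" where
  "Jd c v f p a b \<theta> j = integral {a..b} (\<lambda>x. if \<theta>$j \<le> x then (netw c v \<theta> x - f x) * p x else 0)"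

lemma cont_netw: "continuous_on S (\<lambda>x. netw c v \<theta> x)"
  unfolding netw_def by (intro continuous_intros)

lemma Jd_has_int:
  assumes "continuous_on UNIV f" "continuous_on UNIV p"
  shows "((\<lambda>x. if \<theta>$j \<le> x then (netw c v \<theta> x - f x) * p x else 0) has_integral Jd c v f p a b \<theta> j) {a..b}"
proof -
  have "continuous_on {a..b} (\<lambda>x. (netw c v \<theta> x - f x) * p x)"
    using assms by (intro continuous_intros cont_netw continuous_on_subset[OF assms(1)] continuous_on_subset[OF assms(2)]) auto
  from integrable_integral[OF has_integral_integrable[OF ind_has_int[OF this, of "\<theta>$j"]]]
  show ?thesis unfolding Jd_def .
qed

lemma Jd_eq:
  assumes "continuous_on UNIV f" "continuous_on UNIV p"
  shows "Jd c v f p a b \<theta> j = integral {max a (\<theta>$j)..b} (\<lambda>x. (netw c v \<theta> x - f x) * p x)"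
proof -
  have gc: "continuous_on {a..b} (\<lambda>x. (netw c v \<theta> x - f x) * p x)"
    using assms by (intro continuous_intros cont_netw continuous_on_subset[OF assms(1)] continuous_on_subset[OF assms(2)]) auto
  show ?thesis
    by (rule has_integral_unique[OF Jd_has_int[OF assms, of \<theta> j c v a b] ind_has_int[OF gc, of "\<theta>$j"]])
qed

lemma netw_diff:
  "netw c v y x - netw c v \<theta> x = (\<Sum>j\<in>UNIV. v$j * (max (x - y$j) 0 - max (x - \<theta>$j) 0))"
  unfolding netw_def by (simp add: sum_subtractf[symmetric] algebra_simps)

lemma risk_est:
  fixes \<theta> y :: "real^'h" and f p :: "real \<Rightarrow> real"
  assumes ab: "a < b" and fc: "continuous_on UNIV f" and pc: "continuous_on UNIV p"
    and M: "\<And>x. x\<in>{a..b} \<Longrightarrow> \<bar>netw c v \<theta> x - f x\<bar> \<le> M" "0 \<le> M"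
    and P: "\<And>x. x\<in>{a..b} \<Longrightarrow> \<bar>p x\<bar> \<le> P" "0 \<le> P"
  shows "\<bar>integral {a..b} (\<lambda>x. (netw c v y x - f x)^2 * p x)
          - integral {a..b} (\<lambda>x. (netw c v \<theta> x - f x)^2 * p x)
          - (y - \<theta>) \<bullet> (\<chi> j. -2 * v$j * Jd c v f p a b \<theta> j)\<bar>
         \<le> (4*M*P*(\<Sum>j\<in>UNIV. \<bar>v$j\<bar>) + (\<Sum>j\<in>UNIV. \<bar>v$j\<bar>)^2*P*(b-a)) * (norm (y - \<theta>))^2"
proof -
  define h where "h = y - \<theta>"
  define V where "V = (\<Sum>j\<in>UNIV. \<bar>v$j\<bar>)"
  define nh where "nh = norm h"
  have V0: "0 \<le> V" unfolding V_def by (simp add: sum_nonneg)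
  have hj: "\<bar>h$j\<bar> \<le> nh" for j unfolding nh_def by (rule component_le_norm_cart)
  have yj: "y$j = \<theta>$j + h$j" for j unfolding h_def by simp
  let ?F = "\<lambda>y. integral {a..b} (\<lambda>x. (netw c v y x - f x)^2 * p x)"
  have Fint: "((\<lambda>x. (netw c v z x - f x)^2 * p x) has_integral ?F z) {a..b}" for z
  proof -
    have "continuous_on {a..b} (\<lambda>x. (netw c v z x - f x)^2 * p x)"
      by (intro continuous_intros cont_netw continuous_on_subset[OF fc] continuous_on_subset[OF pc]) auto
    then show ?thesis using integrable_continuous_interval integrable_integral by blast
  qed
  define ind where "ind j x = (if \<theta>$j \<le> x then (netw c v \<theta> x - f x) * p x else 0)" for j x
  have lin: "((\<lambda>x. \<Sum>j\<in>UNIV. (h$j * (-2 * v$j)) * ind j x) has_integral h \<bullet> (\<chi> j. -2 * v$j * Jd c v f p a b \<theta> j)) {a..b}"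
  proof -
    have "((\<lambda>x. \<Sum>j\<in>UNIV. (h$j * (-2 * v$j)) * ind j x) has_integral (\<Sum>j\<in>UNIV. (h$j * (-2 * v$j)) * Jd c v f p a b \<theta> j)) {a..b}"
      by (intro has_integral_sum has_integral_mult_right) (auto simp: ind_def intro: Jd_has_int[OF fc pc])
    moreover have "h \<bullet> (\<chi> j. -2 * v$j * Jd c v f p a b \<theta> j) = (\<Sum>j\<in>UNIV. (h$j * (-2 * v$j)) * Jd c v f p a b \<theta> j)"
      unfolding inner_vec_def by (simp add: algebra_simps)
    ultimately show ?thesis by simp
  qed
  define E where "E x = (netw c v y x - f x)^2 * p x - (netw c v \<theta> x - f x)^2 * p x - (\<Sum>j\<in>UNIV. (h$j * (-2 * v$j)) * ind j x)" for x
  have Eint: "(E has_integral (?F y - ?F \<theta> - h \<bullet> (\<chi> j. -2 * v$j * Jd c v f p a b \<theta> j))) {a..b}"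
    unfolding E_def by (rule has_integral_diff[OF has_integral_diff[OF Fint Fint] lin])
  define R where "R x = P * (2 * M * (\<Sum>j\<in>UNIV. \<bar>v$j\<bar> * (if x \<in> {\<theta>$j - \<bar>h$j\<bar>..\<theta>$j + \<bar>h$j\<bar>} then \<bar>h$j\<bar> else 0)) + (V * nh)^2)" for x
  define IR where "IR = P * (2 * M * (\<Sum>j\<in>UNIV. \<bar>v$j\<bar> * (Henstock_Kurzweil_Integration.content {max (\<theta>$j - \<bar>h$j\<bar>) a..min (\<theta>$j + \<bar>h$j\<bar>) b} * \<bar>h$j\<bar>)) + (V * nh)^2 * (b - a))"
  have Rint: "(R has_integral IR) {a..b}"
  proof -
    have "((\<lambda>x. \<Sum>j\<in>UNIV. \<bar>v$j\<bar> * (if x \<in> {\<theta>$j - \<bar>h$j\<bar>..\<theta>$j + \<bar>h$j\<bar>} then \<bar>h$j\<bar> else 0))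
       has_integral (\<Sum>j\<in>UNIV. \<bar>v$j\<bar> * (Henstock_Kurzweil_Integration.content {max (\<theta>$j - \<bar>h$j\<bar>) a..min (\<theta>$j + \<bar>h$j\<bar>) b} * \<bar>h$j\<bar>))) {a..b}"
      by (intro has_integral_sum has_integral_mult_right ind_const_int) auto
    then have "((\<lambda>x. 2 * M * (\<Sum>j\<in>UNIV. \<bar>v$j\<bar> * (if x \<in> {\<theta>$j - \<bar>h$j\<bar>..\<theta>$j + \<bar>h$j\<bar>} then \<bar>h$j\<bar> else 0)) + (V * nh)^2)
       has_integral (2 * M * (\<Sum>j\<in>UNIV. \<bar>v$j\<bar> * (Henstock_Kurzweil_Integration.content {max (\<theta>$j - \<bar>h$j\<bar>) a..min (\<theta>$j + \<bar>h$j\<bar>) b} * \<bar>h$j\<bar>)) + (V * nh)^2 * (b - a))) {a..b}"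
      using ab has_integral_const_real[of "(V * nh)^2" a b]
      by (intro has_integral_add has_integral_mult_right) (auto simp: mult.commute)
    then show ?thesis unfolding R_def IR_def by (rule has_integral_mult_right)
  qed
  have IRle: "IR \<le> (4*M*P*V + V^2*P*(b-a)) * nh^2"
  proof -
    have "\<bar>v$j\<bar> * (Henstock_Kurzweil_Integration.content {max (\<theta>$j - \<bar>h$j\<bar>) a..min (\<theta>$j + \<bar>h$j\<bar>) b} * \<bar>h$j\<bar>)
          \<le> \<bar>v$j\<bar> * (2 * nh^2)" for j
    proof -
      have "Henstock_Kurzweil_Integration.content {max (\<theta>$j - \<bar>h$j\<bar>) a..min (\<theta>$j + \<bar>h$j\<bar>) b} \<le> 2 * nh"
        using content_le[of "\<theta>$j - \<bar>h$j\<bar>" "\<theta>$j + \<bar>h$j\<bar>" a b] hj[of j] by auto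
      then have "Henstock_Kurzweil_Integration.content {max (\<theta>$j - \<bar>h$j\<bar>) a..min (\<theta>$j + \<bar>h$j\<bar>) b} * \<bar>h$j\<bar> \<le> (2 * nh) * nh"
        using hj[of j] by (intro mult_mono) auto
      then show ?thesis by (intro mult_left_mono) (auto simp: power2_eq_square)
    qed
    then have "(\<Sum>j\<in>UNIV. \<bar>v$j\<bar> * (Henstock_Kurzweil_Integration.content {max (\<theta>$j - \<bar>h$j\<bar>) a..min (\<theta>$j + \<bar>h$j\<bar>) b} * \<bar>h$j\<bar>))
       \<le> (\<Sum>j\<in>UNIV. \<bar>v$j\<bar> * (2 * nh^2))" by (rule sum_mono)
    also have "\<dots> = V * (2 * nh^2)" unfolding V_def by (simp add: sum_distrib_right)
    finally have "2 * M * (\<Sum>j\<in>UNIV. \<bar>v$j\<bar> * (Henstock_Kurzweil_Integration.content {max (\<theta>$j - \<bar>h$j\<bar>) a..min (\<theta>$j + \<bar>h$j\<bar>) b} * \<bar>h$j\<bar>)) \<le> 2 * M * (V * (2 * nh^2))"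
      using M(2) by (intro mult_left_mono) auto
    then have "IR \<le> P * (2 * M * (V * (2 * nh^2)) + (V * nh)^2 * (b - a))"
      unfolding IR_def using P(2) by (intro mult_left_mono) auto
    then show ?thesis by (simp add: algebra_simps power2_eq_square)
  qed
  have pwb: "\<bar>E x\<bar> \<le> R x" if x: "x \<in> {a..b}" for x
  proof -
    define d where "d = (\<Sum>j\<in>UNIV. v$j * (max (x - y$j) 0 - max (x - \<theta>$j) 0))"
    define S' where "S' = (\<Sum>j\<in>UNIV. v$j * (if \<theta>$j \<le> x then h$j else 0))"
    have Ee: "E x = (netw c v y x - f x)^2 * p x - (netw c v \<theta> x - f x)^2 * p x + 2 * (netw c v \<theta> x - f x) * p x * S'"
    proof -
      have "(\<Sum>j\<in>UNIV. (h$j * (-2 * v$j)) * ind j x) = - (2 * (netw c v \<theta> x - f x) * p x * S')"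
        unfolding S'_def ind_def sum_distrib_left sum_negf[symmetric] by (rule sum.cong) auto
      then show ?thesis unfolding E_def by simp
    qed
    have B: "netw c v y x - f x = (netw c v \<theta> x - f x) + d"
      using netw_diff[of c v y x \<theta>] unfolding d_def by simp
    have dS: "d + S' = (\<Sum>j\<in>UNIV. v$j * (max (x - (\<theta>$j + h$j)) 0 - max (x - \<theta>$j) 0 + (if \<theta>$j \<le> x then h$j else 0)))"
      unfolding d_def S'_def yj sum.distrib[symmetric] by (rule sum.cong) (auto simp: algebra_simps)
    have dSb: "\<bar>d + S'\<bar> \<le> (\<Sum>j\<in>UNIV. \<bar>v$j\<bar> * (if x \<in> {\<theta>$j - \<bar>h$j\<bar>..\<theta>$j + \<bar>h$j\<bar>} then \<bar>h$j\<bar> else 0))"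
      unfolding dS
      by (rule order_trans[OF sum_abs], rule sum_mono) (auto simp: abs_mult intro: mult_left_mono r_bound)
    have db: "\<bar>d\<bar> \<le> V * nh"
    proof -
      have "\<bar>d\<bar> \<le> (\<Sum>j\<in>UNIV. \<bar>v$j\<bar> * nh)"
        unfolding d_def
      proof (rule order_trans[OF sum_abs], rule sum_mono)
        fix j
        have "\<bar>max (x - y$j) 0 - max (x - \<theta>$j) 0\<bar> \<le> \<bar>h$j\<bar>" unfolding yj by (auto simp: max_def)
        then show "\<bar>v$j * (max (x - y$j) 0 - max (x - \<theta>$j) 0)\<bar> \<le> \<bar>v$j\<bar> * nh"
          unfolding abs_mult using hj[of j] by (intro mult_left_mono) auto
      qed
      then show ?thesis unfolding V_def by (simp add: sum_distrib_right)
    qed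
    show ?thesis unfolding Ee R_def
      by (rule pw[OF B M(1)[OF x] P(1)[OF x] db dSb])
  qed
  have ni: "norm (integral {a..b} E) \<le> integral {a..b} R"
    by (rule integral_norm_bound_integral) (use Eint Rint pwb in auto)
  have e1: "integral {a..b} E = ?F y - ?F \<theta> - h \<bullet> (\<chi> j. -2 * v$j * Jd c v f p a b \<theta> j)"
    by (rule integral_unique[OF Eint])
  have e2: "integral {a..b} R = IR" by (rule integral_unique[OF Rint])
  have "\<bar>?F y - ?F \<theta> - h \<bullet> (\<chi> j. -2 * v$j * Jd c v f p a b \<theta> j)\<bar> \<le> IR"
    using ni unfolding e1 e2 real_norm_def .
  then have "\<bar>?F y - ?F \<theta> - h \<bullet> (\<chi> j. -2 * v$j * Jd c v f p a b \<theta> j)\<bar> \<le> (4*M*P*V + V^2*P*(b-a)) * nh^2"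
    using IRle by (rule order_trans)
  then show ?thesis unfolding h_def nh_def V_def .
qed



lemma risk_has_deriv:
  fixes \<theta> :: "real^'h" and f p :: "real \<Rightarrow> real"
  assumes ab: "a < b" and fc: "continuous_on UNIV f" and pc: "continuous_on UNIV p"
  shows "((\<lambda>\<theta>. integral {a..b} (\<lambda>x. (netw c v \<theta> x - f x)^2 * p x)) has_derivative
          (\<lambda>h. h \<bullet> (\<chi> j. -2 * v$j * Jd c v f p a b \<theta> j))) (at \<theta>)"
proof -
  have nc: "continuous_on {a..b} (\<lambda>x. netw c v \<theta> x - f x)"
    by (intro continuous_intros cont_netw continuous_on_subset[OF fc]) auto
  obtain M where M: "M \<ge> 0" "\<And>x. x \<in> {a..b} \<Longrightarrow> \<bar>netw c v \<theta> x - f x\<bar> \<le> M"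
    using bounded_cont[OF nc] by blast
  obtain P where P: "P \<ge> 0" "\<And>x. x \<in> {a..b} \<Longrightarrow> \<bar>p x\<bar> \<le> P"
    using bounded_cont[OF continuous_on_subset[OF pc]] by blast
  define V where "V = (\<Sum>j\<in>UNIV. \<bar>v$j\<bar>)"
  have V0: "0 \<le> V" unfolding V_def by (simp add: sum_nonneg)
  define K0 where "K0 = 4*M*P*V + V^2*P*(b-a)"
  have K00: "0 \<le> K0" unfolding K0_def using M P V0 ab by simp
  define K where "K = K0 + 1"
  have K0: "0 < K" using K00 unfolding K_def by simp
  show ?thesis
    unfolding has_derivative_within_alt
  proof (intro conjI allI impI)
    show "bounded_linear (\<lambda>h. h \<bullet> (\<chi> j. -2 * v$j * Jd c v f p a b \<theta> j))"
      by (rule bounded_linear_inner_left)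
  next
    fix e :: real assume e: "e > 0"
    show "\<exists>d>0. \<forall>y\<in>UNIV. norm (y - \<theta>) < d \<longrightarrow>
      norm (integral {a..b} (\<lambda>x. (netw c v y x - f x)^2 * p x) - integral {a..b} (\<lambda>x. (netw c v \<theta> x - f x)^2 * p x)
        - (y - \<theta>) \<bullet> (\<chi> j. -2 * v$j * Jd c v f p a b \<theta> j)) \<le> e * norm (y - \<theta>)"
    proof (intro exI[of _ "e / K"] conjI ballI impI)
      show "e / K > 0" using e K0 by simp
    next
      fix y :: "real^'h" assume "y \<in> UNIV" and yd: "norm (y - \<theta>) < e / K"
      have est: "\<bar>integral {a..b} (\<lambda>x. (netw c v y x - f x)^2 * p x) - integral {a..b} (\<lambda>x. (netw c v \<theta> x - f x)^2 * p x)
        - (y - \<theta>) \<bullet> (\<chi> j. -2 * v$j * Jd c v f p a b \<theta> j)\<bar> \<le> K0 * (norm (y - \<theta>))^2"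
        unfolding K0_def V_def by (rule risk_est[OF ab fc pc M(2) M(1) P(2) P(1)])
      have "K0 * (norm (y - \<theta>))^2 \<le> K * (norm (y - \<theta>))^2"
        unfolding K_def by (simp add: algebra_simps)
      also have "\<dots> = (K * norm (y - \<theta>)) * norm (y - \<theta>)" by (simp add: power2_eq_square)
      also have "\<dots> \<le> e * norm (y - \<theta>)"
      proof (rule mult_right_mono)
        have "K * norm (y - \<theta>) \<le> K * (e / K)" using yd K0 by (intro mult_left_mono) auto
        then show "K * norm (y - \<theta>) \<le> e" using K0 by simp
      qed simp
      finally show "norm (integral {a..b} (\<lambda>x. (netw c v y x - f x)^2 * p x) - integral {a..b} (\<lambda>x. (netw c v \<theta> x - f x)^2 * p x)
        - (y - \<theta>) \<bullet> (\<chi> j. -2 * v$j * Jd c v f p a b \<theta> j)) \<le> e * norm (y - \<theta>)"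
        using est by simp
    qed
  qed
qed

lemma netw_bound: "\<bar>netw c v \<theta> x\<bar> \<le> \<bar>c\<bar> + (\<Sum>j\<in>UNIV. \<bar>v$j\<bar>) * (\<bar>x\<bar> + norm \<theta>)"
proof -
  have "\<bar>\<Sum>j\<in>UNIV. v $ j * max (x - \<theta> $ j) 0\<bar> \<le> (\<Sum>j\<in>UNIV. \<bar>v$j\<bar> * (\<bar>x\<bar> + norm \<theta>))"
  proof (rule order_trans[OF sum_abs], rule sum_mono)
    fix j
    have "\<bar>max (x - \<theta> $ j) 0\<bar> \<le> \<bar>x\<bar> + norm \<theta>"
      using component_le_norm_cart[of \<theta> j] by (auto simp: max_def)
    then show "\<bar>v $ j * max (x - \<theta> $ j) 0\<bar> \<le> \<bar>v$j\<bar> * (\<bar>x\<bar> + norm \<theta>)"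
      unfolding abs_mult by (intro mult_left_mono) auto
  qed
  then show ?thesis unfolding netw_def by (simp add: sum_distrib_right[symmetric])
qed

lemma netw_lip: "\<bar>netw c v \<theta> x - netw c v th2 y\<bar> \<le> (\<Sum>j\<in>UNIV. \<bar>v$j\<bar>) * (\<bar>x - y\<bar> + norm (\<theta> - th2))"
proof -
  have "netw c v \<theta> x - netw c v th2 y = (\<Sum>j\<in>UNIV. v $ j * (max (x - \<theta> $ j) 0 - max (y - th2 $ j) 0))"
    unfolding netw_def by (simp add: sum_subtractf[symmetric] algebra_simps)
  also have "\<bar>\<dots>\<bar> \<le> (\<Sum>j\<in>UNIV. \<bar>v$j\<bar> * (\<bar>x - y\<bar> + norm (\<theta> - th2)))"
  proof (rule order_trans[OF sum_abs], rule sum_mono)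
    fix j
    have "\<bar>max (x - \<theta> $ j) 0 - max (y - th2 $ j) 0\<bar> \<le> \<bar>x - y\<bar> + norm (\<theta> - th2)"
      using component_le_norm_cart[of "\<theta> - th2" j] by (auto simp: max_def)
    then show "\<bar>v $ j * (max (x - \<theta> $ j) 0 - max (y - th2 $ j) 0)\<bar> \<le> \<bar>v$j\<bar> * (\<bar>x - y\<bar> + norm (\<theta> - th2))"
      unfolding abs_mult by (intro mult_left_mono) auto
  qed
  finally show ?thesis by (simp add: sum_distrib_right[symmetric])
qed



theorem lemma3p12:
  fixes a b c :: real
    and v :: "real^'h"
    and f f' p :: "real \<Rightarrow> real"
    and G :: "real^'h \<Rightarrow> real^'h"
    and \<Theta> :: "real \<Rightarrow> real^'h"
    and \<theta>lim :: "real^'h"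
  assumes b_gt: "b > max a 0"
    and f_deriv: "\<And>x. (f has_real_derivative f' x) (at x)"
    and f'_cont: "continuous_on UNIV f'"
    and f'_pos: "\<And>x. f' x > 0"
    and f_a: "f a = 0"
    and p_cont: "continuous_on UNIV p"
    and p_supp: "{x. p x \<noteq> 0} = {a<..<b}"
    and p_nonneg: "\<And>x. p x \<ge> 0"
    and f_strict_convex: "strictly_convex_on UNIV f"
    and v_pos: "Min (range (\<lambda>j. v $ j)) > 0"
    and G_grad: "\<And>\<theta>. risk c v f p differentiable (at \<theta>) \<Longrightarrow>
                   GDERIV (risk c v f p) \<theta> :> - G \<theta>"
    and \<Theta>_cont: "continuous_on {0..} \<Theta>"
    and \<Theta>_flow: "\<And>t. t \<ge> 0 \<Longrightarrow> ((\<lambda>s. G (\<Theta> s)) has_integral (\<Theta> t - \<Theta> 0)) {0..t}"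
    and active: "(\<Sum>j\<in>{i. \<Theta> 0 $ i < b}. v $ j) \<ge> (SUP x\<in>{a..b}. f' x)"
    and conv: "Limsup at_top (\<lambda>t::real. ereal (norm (\<Theta> t - \<theta>lim)
                 + \<bar>risk c v f p (\<Theta> t) - risk c v f p \<theta>lim\<bar>
                 + norm (G (\<Theta> t)) + norm (G \<theta>lim))) = 0"
  shows "netw c v \<theta>lim b \<ge> f b"
proof (rule ccontr)
  assume "\<not> netw c v \<theta>lim b \<ge> f b"
  then have nb: "netw c v \<theta>lim b < f b" by simp
  define \<eta> where "\<eta> = f b - netw c v \<theta>lim b"
  have \<eta>: "\<eta> > 0" using nb unfolding \<eta>_def by simp
  have ab: "a < b" using b_gt by simp
  have fc: "continuous_on UNIV f"
    by (rule continuous_at_imp_continuous_on) (use f_deriv DERIV_isCont in blast)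
  have pne: "p x \<noteq> 0 \<longleftrightarrow> a < x \<and> x < b" for x
    using p_supp[unfolded set_eq_iff] by auto
  have pz: "x \<notin> {a<..<b} \<Longrightarrow> p x = 0" for x using pne[of x] by auto
  have ppos: "a < x \<Longrightarrow> x < b \<Longrightarrow> p x > 0" for x using pne[of x] p_nonneg[of x] by auto
  define V where "V = (\<Sum>j\<in>UNIV. \<bar>v$j\<bar>)"
  have V0: "0 \<le> V" unfolding V_def by (simp add: sum_nonneg)

  have risk_eq: "risk c v f p = (\<lambda>\<theta>. integral {a..b} (\<lambda>x. (netw c v \<theta> x - f x)^2 * p x))"
  proof (rule ext)
    fix \<theta> :: "real^'h"
    have e: "(\<lambda>x. (netw c v \<theta> x - f x)^2 * p x) = (\<lambda>x. if x \<in> {a..b} then (netw c v \<theta> x - f x)^2 * p x else 0)"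
      by (rule ext) (use pz in auto)
    show "risk c v f p \<theta> = integral {a..b} (\<lambda>x. (netw c v \<theta> x - f x)^2 * p x)"
      unfolding risk_def e integral_restrict_UNIV by (rule refl)
  qed

  have Gform: "G \<theta> $ j = 2 * v$j * Jd c v f p a b \<theta> j" for \<theta> j
  proof -
    have d: "(risk c v f p has_derivative (\<lambda>h. h \<bullet> (\<chi> j. -2 * v$j * Jd c v f p a b \<theta> j))) (at \<theta>)"
      unfolding risk_eq by (rule risk_has_deriv[OF ab fc p_cont])
    then have "risk c v f p differentiable (at \<theta>)" by (rule differentiableI)
    from G_grad[OF this] have "(risk c v f p has_derivative (\<lambda>h. h \<bullet> (- G \<theta>))) (at \<theta>)"
      by (simp add: gderiv_def)
    then have "(\<lambda>h. h \<bullet> (- G \<theta>)) = (\<lambda>h. h \<bullet> (\<chi> j. -2 * v$j * Jd c v f p a b \<theta> j))"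
      using has_derivative_unique d by blast
    then have "axis j 1 \<bullet> (- G \<theta>) = axis j 1 \<bullet> (\<chi> j. -2 * v$j * Jd c v f p a b \<theta> j)"
      by metis
    then show ?thesis by (simp add: inner_axis')
  qed

  have vpos: "v$j > 0" for j
  proof -
    have "Min (range (\<lambda>j. v $ j)) \<le> v$j" by (rule Min_le) auto
    then show ?thesis using v_pos by simp
  qed

  define L where "L = (SUP x\<in>{a..b}. f' x)"
  have bdd: "bdd_above (f' ` {a..b})"
    by (rule bounded_imp_bdd_above, rule compact_imp_bounded, rule compact_continuous_image)
      (auto intro: continuous_on_subset[OF f'_cont])
  have fle: "x \<in> {a..b} \<Longrightarrow> f' x \<le> L" for x
    unfolding L_def by (rule cSUP_upper[OF _ bdd])
  have L0: "L > 0" using fle[of a] f'_pos[of a] ab by simp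
  define A0 where "A0 = {i. \<Theta> 0 $ i < b}"
  have actL: "(\<Sum>j\<in>A0. v $ j) \<ge> L" using active unfolding A0_def L_def .

  have ev: "eventually (\<lambda>t. norm (\<Theta> t - \<theta>lim) + \<bar>risk c v f p (\<Theta> t) - risk c v f p \<theta>lim\<bar>
                 + norm (G (\<Theta> t)) + norm (G \<theta>lim) < \<epsilon>) at_top" if "\<epsilon> > 0" for \<epsilon>
  proof -
    have "eventually (\<lambda>t. ereal (norm (\<Theta> t - \<theta>lim) + \<bar>risk c v f p (\<Theta> t) - risk c v f p \<theta>lim\<bar>
                 + norm (G (\<Theta> t)) + norm (G \<theta>lim)) < ereal \<epsilon>) at_top"
      by (rule Limsup_lessD) (use conv that in simp)
    then show ?thesis by simp
  qed
  have G0: "G \<theta>lim = 0"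
  proof (rule ccontr)
    assume "G \<theta>lim \<noteq> 0"
    then have "norm (G \<theta>lim) > 0" by simp
    from ev[OF this] obtain N where "\<And>t. t \<ge> N \<Longrightarrow> norm (\<Theta> t - \<theta>lim) + \<bar>risk c v f p (\<Theta> t) - risk c v f p \<theta>lim\<bar>
                 + norm (G (\<Theta> t)) + norm (G \<theta>lim) < norm (G \<theta>lim)"
      unfolding eventually_at_top_linorder by blast
    from this[of N] show False
      using norm_ge_zero[of "\<Theta> N - \<theta>lim"] norm_ge_zero[of "G (\<Theta> N)"]
        abs_ge_zero[of "risk c v f p (\<Theta> N) - risk c v f p \<theta>lim"] by linarith
  qed
  have \<Theta>lim: "(\<Theta> \<longlongrightarrow> \<theta>lim) at_top"
    unfolding tendsto_iff dist_norm
  proof (intro allI impI)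
    fix \<epsilon> :: real assume "\<epsilon> > 0"
    from ev[OF this] show "eventually (\<lambda>t. norm (\<Theta> t - \<theta>lim) < \<epsilon>) at_top"
    proof (rule eventually_mono)
      fix t assume "norm (\<Theta> t - \<theta>lim) + \<bar>risk c v f p (\<Theta> t) - risk c v f p \<theta>lim\<bar>
                 + norm (G (\<Theta> t)) + norm (G \<theta>lim) < \<epsilon>"
      then show "norm (\<Theta> t - \<theta>lim) < \<epsilon>"
        using norm_ge_zero[of "G \<theta>lim"] norm_ge_zero[of "G (\<Theta> t)"]
          abs_ge_zero[of "risk c v f p (\<Theta> t) - risk c v f p \<theta>lim"] by linarith
    qed
  qed

  have flow2: "((\<lambda>r. G (\<Theta> r) $ j) has_integral (\<Theta> t $ j - \<Theta> s $ j)) {s..t}"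
    if st: "0 \<le> s" "s \<le> t" for s t j
  proof -
    have it: "(\<lambda>r. G (\<Theta> r)) integrable_on {0..t}" using has_integral_integrable[OF \<Theta>_flow[of t]] st by simp
    have "integral {0..s} (\<lambda>r. G (\<Theta> r)) + integral {s..t} (\<lambda>r. G (\<Theta> r)) = integral {0..t} (\<lambda>r. G (\<Theta> r))"
      by (rule Henstock_Kurzweil_Integration.integral_combine) (use it st in auto)
    moreover have "integral {0..s} (\<lambda>r. G (\<Theta> r)) = \<Theta> s - \<Theta> 0"
      using \<Theta>_flow[of s] st by (simp add: integral_unique)
    moreover have "integral {0..t} (\<lambda>r. G (\<Theta> r)) = \<Theta> t - \<Theta> 0"
      using \<Theta>_flow[of t] st by (simp add: integral_unique)
    ultimately have i: "integral {s..t} (\<lambda>r. G (\<Theta> r)) = \<Theta> t - \<Theta> s" by (simp add: algebra_simps)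
    have "(\<lambda>r. G (\<Theta> r)) integrable_on {s..t}" by (rule integrable_subinterval_real[OF it]) (use st in auto)
    with i have "((\<lambda>r. G (\<Theta> r)) has_integral (\<Theta> t - \<Theta> s)) {s..t}"
      by (metis has_integral_integrable_integral)
    from has_integral_linear[OF this bounded_linear_vec_nth[of j]] show ?thesis by (simp add: o_def)
  qed

  obtain Fm where Fm: "Fm \<ge> 0" "\<And>x. x \<in> {a..b} \<Longrightarrow> \<bar>f x\<bar> \<le> Fm"
    using bounded_cont[OF continuous_on_subset[OF fc]] by blast
  obtain P where P: "P \<ge> 0" "\<And>x. x \<in> {a..b} \<Longrightarrow> \<bar>p x\<bar> \<le> P"
    using bounded_cont[OF continuous_on_subset[OF p_cont]] by blast

  have Gb: "\<bar>G \<theta> $ j\<bar> \<le> 2 * v$j * ((\<bar>c\<bar> + V*(\<bar>a\<bar> + \<bar>b\<bar> + R) + Fm) * P) * max (b - \<theta>$j) 0"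
    if R: "norm \<theta> \<le> R" for \<theta> j R
  proof -
    have R0: "0 \<le> R" using R norm_ge_zero[of \<theta>] by linarith
    have gc: "continuous_on {a..b} (\<lambda>x. (netw c v \<theta> x - f x) * p x)"
      by (intro continuous_intros cont_netw continuous_on_subset[OF fc] continuous_on_subset[OF p_cont]) auto
    have B0: "0 \<le> (\<bar>c\<bar> + V*(\<bar>a\<bar> + \<bar>b\<bar> + R) + Fm) * P"
      using V0 R0 Fm P by simp
    have pwb: "\<bar>(netw c v \<theta> x - f x) * p x\<bar> \<le> (\<bar>c\<bar> + V*(\<bar>a\<bar> + \<bar>b\<bar> + R) + Fm) * P"
      if x: "x \<in> {a..b}" for x
    proof -
      have "\<bar>x\<bar> + norm \<theta> \<le> \<bar>a\<bar> + \<bar>b\<bar> + R" using x R by auto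
      then have "V * (\<bar>x\<bar> + norm \<theta>) \<le> V * (\<bar>a\<bar> + \<bar>b\<bar> + R)" using V0 by (rule mult_left_mono)
      then have "\<bar>netw c v \<theta> x - f x\<bar> \<le> \<bar>c\<bar> + V*(\<bar>a\<bar> + \<bar>b\<bar> + R) + Fm"
        using netw_bound[of c v \<theta> x] Fm(2)[OF x] unfolding V_def by linarith
      then show ?thesis unfolding abs_mult using P(2)[OF x] P(1)
        by (intro mult_mono) auto
    qed
    have "\<bar>Jd c v f p a b \<theta> j\<bar> \<le> ((\<bar>c\<bar> + V*(\<bar>a\<bar> + \<bar>b\<bar> + R) + Fm) * P) * max (b - \<theta>$j) 0"
      unfolding Jd_eq[OF fc p_cont] by (rule ind_bound[OF gc B0 pwb])
    then have "2 * v$j * \<bar>Jd c v f p a b \<theta> j\<bar> \<le> 2 * v$j * (((\<bar>c\<bar> + V*(\<bar>a\<bar> + \<bar>b\<bar> + R) + Fm) * P) * max (b - \<theta>$j) 0)"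
      using vpos[of j] by (intro mult_left_mono) auto
    then show ?thesis unfolding Gform abs_mult using vpos[of j] by (simp add: mult.assoc)
  qed

  have stay: "\<Theta> t $ j < b" if j0: "\<Theta> 0 $ j < b" and t0: "t \<ge> 0" for j t
  proof (rule ccontr)
    assume "\<not> \<Theta> t $ j < b"
    define u where "u r = b - \<Theta> r $ j" for r
    have uc: "continuous_on {0..} u"
      using continuous_on_component[OF \<Theta>_cont, of j] unfolding u_def by (intro continuous_intros \<Theta>_cont)
    define S where "S = {0..t} \<inter> u -` {..0}"
    have Sc: "closed S" unfolding S_def
      by (rule continuous_closed_preimage[OF continuous_on_subset[OF uc]]) auto
    have tS: "t \<in> S" unfolding S_def u_def using t0 \<open>\<not> \<Theta> t $ j < b\<close> by auto
    have Sb: "bdd_below S" unfolding S_def by (rule bdd_belowI[of _ 0]) auto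
    define ts where "ts = Inf S"
    have tsS: "ts \<in> S" unfolding ts_def using Sc tS Sb closed_contains_Inf by blast
    then have ts0: "0 \<le> ts" "ts \<le> t" "u ts \<le> 0" unfolding S_def by auto
    have upos: "u r > 0" if "0 \<le> r" "r < ts" for r
    proof (rule ccontr)
      assume "\<not> u r > 0"
      then have "r \<in> S" unfolding S_def using that ts0 by auto
      then have "ts \<le> r" unfolding ts_def using Sb by (rule cInf_lower)
      with that show False by simp
    qed
    have u0: "u 0 > 0" unfolding u_def using j0 by simp
    have tspos: "ts > 0" using ts0 u0 by (cases "ts = 0") auto
    have "compact (\<Theta> ` {0..ts})"
      by (rule compact_continuous_image[OF continuous_on_subset[OF \<Theta>_cont]]) auto
    then have "bounded (\<Theta> ` {0..ts})" by (rule compact_imp_bounded)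
    then obtain R where R0': "\<forall>y\<in>\<Theta> ` {0..ts}. norm y \<le> R"
      unfolding bounded_iff by blast
    have R: "norm (\<Theta> r) \<le> R" if "r \<in> {0..ts}" for r using R0' that by blast
    have R0: "0 \<le> R" using order_trans[OF norm_ge_zero R[of 0]] ts0 by simp
    define C where "C = 2 * v$j * ((\<bar>c\<bar> + V*(\<bar>a\<bar> + \<bar>b\<bar> + R) + Fm) * P) + 1"
    have C0': "0 \<le> 2 * v$j * ((\<bar>c\<bar> + V*(\<bar>a\<bar> + \<bar>b\<bar> + R) + Fm) * P)"
      using vpos[of j] V0 R0 Fm P by simp
    have C0: "C > 0" unfolding C_def using C0' by linarith
    have Gb': "\<bar>G (\<Theta> r) $ j\<bar> \<le> C * max (u r) 0" if "r \<in> {0..ts}" for r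
    proof -
      have "\<bar>G (\<Theta> r) $ j\<bar> \<le> 2 * v$j * ((\<bar>c\<bar> + V*(\<bar>a\<bar> + \<bar>b\<bar> + R) + Fm) * P) * max (u r) 0"
        using Gb[OF R[OF that], of j] unfolding u_def .
      also have "\<dots> \<le> C * max (u r) 0" unfolding C_def by (intro mult_right_mono) auto
      finally show ?thesis .
    qed
    define \<epsilon> where "\<epsilon> = min ts (1 / (4 * C))"
    have \<epsilon>: "\<epsilon> > 0" "\<epsilon> \<le> ts" "\<epsilon> \<le> 1 / (4 * C)" unfolding \<epsilon>_def using tspos C0 by auto
    define s0 where "s0 = ts - \<epsilon>"
    have s0: "0 \<le> s0" "s0 < ts" unfolding s0_def using \<epsilon> by auto
    have us0: "u s0 > 0" using upos s0 by auto
    obtain r0 where r0: "r0 \<in> {s0..ts}" "\<And>r. r \<in> {s0..ts} \<Longrightarrow> u r \<le> u r0"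
      using continuous_attains_sup[of "{s0..ts}" u] continuous_on_subset[OF uc, of "{s0..ts}"] s0 by auto
    define U where "U = u r0"
    have U0: "U > 0" unfolding U_def using r0(2)[of s0] s0 us0 by auto
    have CU: "C * U * \<epsilon> \<le> U / 4"
    proof -
      have "C * U * \<epsilon> \<le> C * U * (1 / (4 * C))" using \<epsilon> C0 U0 by (intro mult_left_mono) auto
      also have "\<dots> = U / 4" using C0 by (simp add: field_simps)
      finally show ?thesis .
    qed
    have incr: "\<bar>u r - u s0\<bar> \<le> U / 4" if r: "r \<in> {s0..ts}" for r
    proof -
      have hi: "((\<lambda>r. G (\<Theta> r) $ j) has_integral (\<Theta> r $ j - \<Theta> s0 $ j)) {s0..r}"
        using flow2[of s0 r j] s0 r by auto
      have "norm (\<Theta> r $ j - \<Theta> s0 $ j) \<le> (C * U) * Henstock_Kurzweil_Integration.content {s0..r}"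
      proof (rule has_integral_bound_real[OF _ _ hi, where S="{}"])
        show "0 \<le> C * U" using C0 U0 by simp
        fix x assume x: "x \<in> {s0..r} - {}"
        then have x': "x \<in> {0..ts}" "x \<in> {s0..ts}" using r s0 by auto
        have "max (u x) 0 \<le> U" using r0(2)[OF x'(2)] U0 unfolding U_def by auto
        then have "C * max (u x) 0 \<le> C * U" using C0 by (intro mult_left_mono) auto
        then show "norm (G (\<Theta> x) $ j) \<le> C * U" using Gb'[OF x'(1)] by simp
      qed simp
      also have "\<dots> = C * U * (r - s0)" using r by simp
      also have "\<dots> \<le> C * U * \<epsilon>" using r C0 U0 unfolding s0_def by (intro mult_left_mono) auto
      finally have "\<bar>\<Theta> r $ j - \<Theta> s0 $ j\<bar> \<le> C * U * \<epsilon>" by simp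
      moreover have "\<bar>u r - u s0\<bar> = \<bar>\<Theta> r $ j - \<Theta> s0 $ j\<bar>" unfolding u_def by (simp add: abs_minus_commute)
      ultimately show ?thesis using CU by linarith
    qed
    have "U \<le> u s0 + U / 4" using incr[OF r0(1)] unfolding U_def abs_le_iff by linarith
    moreover have "u ts \<ge> u s0 - U / 4" using incr[of ts] s0 unfolding abs_le_iff by auto
    ultimately show False using us0 ts0(3) by linarith
  qed

  obtain \<delta> where \<delta>: "\<delta> > 0" and \<delta>neg: "\<And>\<theta> x. norm (\<theta> - \<theta>lim) < \<delta> \<Longrightarrow> x \<in> {b-\<delta>..b} \<Longrightarrow> netw c v \<theta> x - f x < 0"
  proof -
    have "isCont f b" using fc by (simp add: continuous_on_eq_continuous_at)
    then obtain \<delta>1 where \<delta>1: "\<delta>1 > 0" "\<And>x. dist x b < \<delta>1 \<Longrightarrow> dist (f x) (f b) < \<eta> / 2"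
      unfolding continuous_at_eps_delta using \<eta> by (metis half_gt_zero)
    define \<delta> where "\<delta> = min (\<delta>1 / 2) (\<eta> / (4 * (V + 1)))"
    have d0: "\<delta> > 0" unfolding \<delta>_def using \<delta>1 \<eta> V0 by simp
    have Vd: "V * (2 * \<delta>) < \<eta> / 2"
    proof -
      have "V * (2 * \<delta>) \<le> V * (2 * (\<eta> / (4 * (V + 1))))" unfolding \<delta>_def using V0 by (intro mult_left_mono) auto
      also have "\<dots> < \<eta> / 2" using V0 \<eta> by (simp add: field_simps)
      finally show ?thesis .
    qed
    show ?thesis
    proof (rule that[OF d0])
      fix \<theta> x assume th: "norm (\<theta> - \<theta>lim) < \<delta>" and x: "x \<in> {b-\<delta>..b}"
      have "\<bar>x - b\<bar> + norm (\<theta> - \<theta>lim) \<le> 2 * \<delta>" using th x by auto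
      then have "V * (\<bar>x - b\<bar> + norm (\<theta> - \<theta>lim)) \<le> V * (2 * \<delta>)" using V0 by (rule mult_left_mono)
      then have n1: "netw c v \<theta> x < netw c v \<theta>lim b + \<eta> / 2"
        using netw_lip[of c v \<theta> x \<theta>lim b] Vd unfolding V_def by linarith
      have "dist x b < \<delta>1" using x d0 \<delta>1 unfolding \<delta>_def dist_real_def by auto
      then have "f x > f b - \<eta> / 2" using \<delta>1(2)[of x] unfolding dist_real_def by linarith
      with n1 show "netw c v \<theta> x - f x < 0" using \<eta>_def by linarith
    qed
  qed

  have stepB: "\<theta>lim $ j < b" if j0: "\<Theta> 0 $ j < b" for j
  proof (rule ccontr)
    assume "\<not> \<theta>lim $ j < b"
    then have jb: "\<theta>lim $ j \<ge> b" by simp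
    from \<Theta>lim \<delta> have "eventually (\<lambda>t. dist (\<Theta> t) \<theta>lim < \<delta>) at_top" by (rule tendstoD)
    then obtain T0 where T0: "\<And>t. t \<ge> T0 \<Longrightarrow> norm (\<Theta> t - \<theta>lim) < \<delta>"
      unfolding eventually_at_top_linorder dist_norm by blast
    define T where "T = max T0 0"
    have Gneg: "G (\<Theta> t) $ j \<le> 0" if t: "t \<ge> T" for t
    proof -
      have nt: "norm (\<Theta> t - \<theta>lim) < \<delta>" using T0 t unfolding T_def by simp
      have "\<bar>\<Theta> t $ j - \<theta>lim $ j\<bar> < \<delta>"
        using component_le_norm_cart[of "\<Theta> t - \<theta>lim" j] nt by simp
      then have tj: "\<Theta> t $ j > b - \<delta>" using jb by linarith
      have "Jd c v f p a b (\<Theta> t) j \<le> 0"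
      proof (rule has_integral_le[OF Jd_has_int[OF fc p_cont] has_integral_0])
        fix x assume x: "x \<in> {a..b}"
        show "(if \<Theta> t $ j \<le> x then (netw c v (\<Theta> t) x - f x) * p x else 0) \<le> 0"
        proof (cases "\<Theta> t $ j \<le> x")
          case True
          then have "x \<in> {b-\<delta>..b}" using tj x by auto
          then have "netw c v (\<Theta> t) x - f x < 0" using \<delta>neg nt by blast
          then show ?thesis using True p_nonneg[of x] by (simp add: mult_nonpos_nonneg)
        qed simp
      qed
      then show ?thesis unfolding Gform using vpos[of j] by (simp add: mult_nonneg_nonpos)
    qed
    have mono: "\<Theta> t $ j \<le> \<Theta> T $ j" if t: "t \<ge> T" for t
    proof -
      have "\<Theta> t $ j - \<Theta> T $ j \<le> 0"
        by (rule has_integral_le[OF flow2[of T t j] has_integral_0]) (use t Gneg in \<open>auto simp: T_def\<close>)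
      then show ?thesis by simp
    qed
    have "((\<lambda>t. \<Theta> t $ j) \<longlongrightarrow> \<theta>lim $ j) at_top" by (rule tendsto_vec_nth[OF \<Theta>lim])
    moreover have "eventually (\<lambda>t. \<Theta> t $ j \<le> \<Theta> T $ j) at_top"
      unfolding eventually_at_top_linorder using mono by blast
    ultimately have "\<theta>lim $ j \<le> \<Theta> T $ j" by (rule tendsto_upperbound) simp
    moreover have "\<Theta> T $ j < b" using stay[OF j0] unfolding T_def by simp
    ultimately show False using jb by simp
  qed

  define J where "J = {j. \<theta>lim $ j < b}"
  have A0J: "A0 \<subseteq> J" unfolding A0_def J_def using stepB by auto
  have sumJ: "(\<Sum>j\<in>J. v $ j) \<ge> L"
  proof -
    have "(\<Sum>j\<in>A0. v $ j) \<le> (\<Sum>j\<in>J. v $ j)"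
      by (rule sum_mono2) (use A0J vpos less_imp_le in auto)
    then show ?thesis using actL by simp
  qed
  have Jne: "J \<noteq> {}"
  proof
    assume "J = {}"
    then have "A0 = {}" using A0J by auto
    then show False using actL L0 by simp
  qed
  define m where "m = Max ((\<lambda>j. \<theta>lim $ j) ` J)"
  have "m \<in> (\<lambda>j. \<theta>lim $ j) ` J" unfolding m_def by (rule Max_in) (use Jne in auto)
  then obtain j0 where j0: "j0 \<in> J" "\<theta>lim $ j0 = m" by auto
  have mle: "j \<in> J \<Longrightarrow> \<theta>lim $ j \<le> m" for j unfolding m_def by (rule Max_ge) auto
  have mb: "m < b" using j0 unfolding J_def by auto
  define m' where "m' = max a m"
  have m': "a \<le> m'" "m' < b" "m \<le> m'" unfolding m'_def using mb ab by auto
  have Jd0: "Jd c v f p a b \<theta>lim j0 = 0"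
    using Gform[of \<theta>lim j0] G0 vpos[of j0] by simp
  have JdE: "Jd c v f p a b \<theta>lim j0 = integral {m'..b} (\<lambda>x. (netw c v \<theta>lim x - f x) * p x)"
    unfolding Jd_eq[OF fc p_cont] m'_def j0(2) ..
  have phile: "netw c v \<theta>lim x - f x \<le> - \<eta>" if x: "x \<in> {m'..b}" for x
  proof -
    have "netw c v \<theta>lim b - netw c v \<theta>lim x = (\<Sum>j\<in>UNIV. v$j * (max (b - \<theta>lim$j) 0 - max (x - \<theta>lim$j) 0))"
      unfolding netw_def by (simp add: sum_subtractf[symmetric] algebra_simps)
    also have "\<dots> = (\<Sum>j\<in>UNIV. if j \<in> J then v$j * (b - x) else 0)"
    proof (rule sum.cong)
      fix j assume "j \<in> (UNIV :: 'h set)"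
      show "v$j * (max (b - \<theta>lim$j) 0 - max (x - \<theta>lim$j) 0) = (if j \<in> J then v$j * (b - x) else 0)"
      proof (cases "j \<in> J")
        case True
        then have "\<theta>lim $ j \<le> x" using mle[OF True] m' x by auto
        then show ?thesis using True x by (simp add: J_def max_def)
      next
        case False
        then have "\<theta>lim $ j \<ge> b" unfolding J_def by simp
        then show ?thesis using False x by (simp add: max_def)
      qed
    qed simp
    also have "\<dots> = (\<Sum>j\<in>J. v$j * (b - x))"
      by (simp add: sum.inter_restrict[symmetric])
    also have "\<dots> = (\<Sum>j\<in>J. v$j) * (b - x)" by (simp add: sum_distrib_right)
    finally have nd: "netw c v \<theta>lim b - netw c v \<theta>lim x = (\<Sum>j\<in>J. v$j) * (b - x)" .
    have fd: "f b - f x \<le> L * (b - x)"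
    proof (cases "x < b")
      case True
      from MVT2[OF True, of f f'] f_deriv obtain z where z: "x < z" "z < b" "f b - f x = (b - x) * f' z"
        by blast
      have "f' z \<le> L" using fle[of z] z x m' by auto
      then show ?thesis using z True by (simp add: mult.commute mult_left_mono)
    next
      case False
      then have "x = b" using x by auto
      then show ?thesis by simp
    qed
    have "L * (b - x) \<le> (\<Sum>j\<in>J. v$j) * (b - x)" using sumJ x by (intro mult_right_mono) auto
    then show ?thesis using nd fd unfolding \<eta>_def by linarith
  qed
  have pint: "(p has_integral integral {m'..b} p) {m'..b}"
    by (rule integrable_integral, rule integrable_continuous_interval, rule continuous_on_subset[OF p_cont]) auto
  have intp: "integral {m'..b} p > 0"
  proof -
    define z where "z = (m' + b) / 2"
    have z: "a < z" "z < b" "m' < z" unfolding z_def using m' by auto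
    have pz0: "p z > 0" using ppos z by auto
    have "isCont p z" using p_cont by (simp add: continuous_on_eq_continuous_at)
    then obtain \<rho> where \<rho>: "\<rho> > 0" "\<And>x. dist x z < \<rho> \<Longrightarrow> dist (p x) (p z) < p z / 2"
      unfolding continuous_at_eps_delta using pz0 by (metis half_gt_zero)
    define \<rho>' where "\<rho>' = min (\<rho> / 2) ((b - m') / 2)"
    have r1: "\<rho>' \<le> \<rho> / 2" "\<rho>' \<le> (b - m') / 2" "\<rho>' > 0" unfolding \<rho>'_def using \<rho> m' by (auto simp: min_def)
    have \<rho>'1: "\<rho>' < \<rho>" using r1 \<rho> by linarith
    have \<rho>'2: "m' \<le> z - \<rho>'" using r1 unfolding z_def by (simp add: field_simps)
    have \<rho>'3: "z + \<rho>' \<le> b" using r1 unfolding z_def by (simp add: field_simps)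
    note \<rho>' = r1(3) \<rho>'1 \<rho>'2 \<rho>'3
    have qint: "((\<lambda>x. if x \<in> {z - \<rho>'..z + \<rho>'} then p z / 2 else 0) has_integral
        (Henstock_Kurzweil_Integration.content {max (z - \<rho>') m'..min (z + \<rho>') b} * (p z / 2))) {m'..b}"
      by (rule ind_const_int) (use \<rho>' pz0 in auto)
    have "Henstock_Kurzweil_Integration.content {max (z - \<rho>') m'..min (z + \<rho>') b} * (p z / 2) \<le> integral {m'..b} p"
    proof (rule has_integral_le[OF qint pint])
      fix x assume x: "x \<in> {m'..b}"
      show "(if x \<in> {z - \<rho>'..z + \<rho>'} then p z / 2 else 0) \<le> p x"
      proof (cases "x \<in> {z - \<rho>'..z + \<rho>'}")
        case True
        then have "dist x z < \<rho>" using \<rho>' unfolding dist_real_def by auto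
        then have "dist (p x) (p z) < p z / 2" by (rule \<rho>(2))
        then have "p z / 2 \<le> p x" unfolding dist_real_def abs_less_iff by linarith
        then show ?thesis using True by simp
      qed (use p_nonneg in auto)
    qed
    moreover have "Henstock_Kurzweil_Integration.content {max (z - \<rho>') m'..min (z + \<rho>') b} = 2 * \<rho>'"
      using \<rho>' by simp
    ultimately have "2 * \<rho>' * (p z / 2) \<le> integral {m'..b} p" by simp
    moreover have "0 < 2 * \<rho>' * (p z / 2)" using \<rho>'(1) pz0 by simp
    ultimately show ?thesis by linarith
  qed
  have "integral {m'..b} (\<lambda>x. (netw c v \<theta>lim x - f x) * p x) \<le> - \<eta> * integral {m'..b} p"
  proof (rule has_integral_le)
    show "((\<lambda>x. (netw c v \<theta>lim x - f x) * p x) has_integral integral {m'..b} (\<lambda>x. (netw c v \<theta>lim x - f x) * p x)) {m'..b}"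
      by (rule integrable_integral, rule integrable_continuous_interval)
        (intro continuous_intros cont_netw continuous_on_subset[OF fc] continuous_on_subset[OF p_cont]; auto)
    show "((\<lambda>x. - \<eta> * p x) has_integral - \<eta> * integral {m'..b} p) {m'..b}"
      by (rule has_integral_mult_right[OF pint])
    fix x assume x: "x \<in> {m'..b}"
    show "(netw c v \<theta>lim x - f x) * p x \<le> - \<eta> * p x"
      using phile[OF x] p_nonneg[of x] by (rule mult_right_mono)
  qed
  moreover have "- \<eta> * integral {m'..b} p < 0" using \<eta> intp by (simp add: mult_pos_pos)
  ultimately show False using Jd0 JdE by simp
qed


end
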